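(* Let $p,q\ge 0$ be integers with $n=p+q\ge 1$, let $Y$ be a metric space, and let $\mathcal{C}(Y;\mathbb{R}_{p,q})$ denote the set of all continuous functions from $Y$ to the Clifford algebra $\mathbb{R}_{p,q}$ (with its topology as a finite-dimensional real vector space). Let $B\subset \mathcal{C}(Y;\mathbb{R}_{p,q})$ be a subset such that $B$ contains the constant function $1$ and $B$ separates the points of $Y$ (for all $x\neq y$ in $Y$ there is $f\in B$ with $f(x)\neq f(y)$). If $n$ is odd, assume in addition that $B$ is stable under the principal automorphism, i.e. $f\in B$ implies $f_*\in B$, where $f_*(y)=(f(y))_*$. Let $A_B(Y;\mathbb{R}_{p,q})$ be the algebra generated by $B$, i.e. the smallest real subalgebra of $\mathcal{C}(Y;\mathbb{R}_{p,q})$ (under pointwise addition and Clifford multiplication) containing $B$ and all constant functions $Y\to\mathbb{R}_{p,q}$. Then $A_B(Y;\mathbb{R}_{p,q})$ is dense in $\mathcal{C}(Y;\mathbb{R}_{p,q})$ for the topology of uniform convergence on compact subsets of $Y$.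
   Context: $\mathbb{R}_{p,q}$ is the universal real Clifford algebra of $\mathbb{R}^n$, $n=p+q$, with basis $\{e_A\}$ indexed by strictly increasing multi-indices $A=(a_1<\dots<a_k)\subset\{1,\dots,n\}$ (with $e_\emptyset=1$, $e_A=e_{a_1}\cdots e_{a_k}$), subject to $e_i^2=1$ for $1\le i\le p$, $e_i^2=-1$ for $p+1\le i\le n$, and $e_ie_j=-e_je_i$ for $i\neq j$. Every $a\in\mathbb{R}_{p,q}$ decomposes as $a=\sum_{k=0}^n\langle a\rangle_k$ with $\langle a\rangle_k=\sum_{|A|=k}a_Ae_A$, $a_A\in\mathbb{R}$. The principal automorphism is $a_*=\sum_{k=0}^n(-1)^k\langle a\rangle_k$. *)

theory Defs
  imports "HOL-Analysis.Analysis"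
begin

text \<open>Elements of the Clifford algebra R_{p,q} (n = p + q) are represented by their
coefficient functions a :: nat set => real, a A being the coefficient of e_A,
with support contained in the multi-indices A \<subseteq> {1..n}.  The function type
carries the product topology, which on the carrier is the usual topology of a
finite-dimensional real vector space.\<close>

type_synonym clif = "nat set \<Rightarrow> real"

definition clif_carrier :: "nat \<Rightarrow> clif set" where
  "clif_carrier n = {a. \<forall>A. A \<notin> Pow {1..n} \<longrightarrow> a A = 0}"

text \<open>Sign in e_A e_B = clif_sign p A B * e_{A \<Delta> B}: reordering sign times the
squares e_i^2 = -1 for common indices i > p.\<close>
definition clif_sign :: "nat \<Rightarrow> nat set \<Rightarrow> nat set \<Rightarrow> real" where
  "clif_sign p A B =
     (-1) ^ card {(i, j). i \<in> A \<and> j \<in> B \<and> j < i} * (-1) ^ card {i \<in> A \<inter> B. p < i}"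

definition clif_mult :: "nat \<Rightarrow> nat \<Rightarrow> clif \<Rightarrow> clif \<Rightarrow> clif" where
  "clif_mult p q a b = (\<lambda>C. \<Sum>A\<in>Pow {1..p+q}. \<Sum>B\<in>Pow {1..p+q}.
      if (A - B) \<union> (B - A) = C then clif_sign p A B * a A * b B else 0)"

definition clif_one :: clif where
  "clif_one = (\<lambda>A. if A = {} then 1 else 0)"

text \<open>Principal automorphism a_* = sum_k (-1)^k <a>_k.\<close>
definition clif_star :: "clif \<Rightarrow> clif" where
  "clif_star a = (\<lambda>A. (-1) ^ card A * a A)"

inductive_set gen_alg :: "nat \<Rightarrow> nat \<Rightarrow> ('a \<Rightarrow> clif) set \<Rightarrow> ('a \<Rightarrow> clif) set"
  for p q :: nat and B :: "('a \<Rightarrow> clif) set" where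
  gen_base: "f \<in> B \<Longrightarrow> f \<in> gen_alg p q B"
| gen_const: "c \<in> clif_carrier (p+q) \<Longrightarrow> (\<lambda>y. c) \<in> gen_alg p q B"
| gen_add: "f \<in> gen_alg p q B \<Longrightarrow> g \<in> gen_alg p q B \<Longrightarrow> (\<lambda>y. (\<lambda>A. f y A + g y A)) \<in> gen_alg p q B"
| gen_scale: "f \<in> gen_alg p q B \<Longrightarrow> (\<lambda>y. (\<lambda>A. r * f y A)) \<in> gen_alg p q B"
| gen_mult: "f \<in> gen_alg p q B \<Longrightarrow> g \<in> gen_alg p q B \<Longrightarrow>
     (\<lambda>y. clif_mult p q (f y) (g y)) \<in> gen_alg p q B"

text \<open>C(Y; R_{p,q}) for Y = UNIV :: 'a.\<close>
definition clif_cont :: "nat \<Rightarrow> ('a::topological_space \<Rightarrow> clif) set" where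
  "clif_cont n = {f. continuous_on UNIV f \<and> (\<forall>y. f y \<in> clif_carrier n)}"

end

theory Submission
  imports Defs
begin

definition bas :: "nat set \<Rightarrow> clif" where "bas S = (\<lambda>A. if A = S then 1 else 0)"
definition sc :: "real \<Rightarrow> clif" where "sc r = (\<lambda>A. if A = {} then r else 0)"

abbreviation sdiff :: "nat set \<Rightarrow> nat set \<Rightarrow> nat set" where "sdiff A B \<equiv> (A - B) \<union> (B - A)"

lemma sdiff_eq_iff: "(sdiff S B = C) \<longleftrightarrow> (B = sdiff S C)"
  by blast

lemma mult_carrier: "clif_mult p q a b \<in> clif_carrier (p+q)"
  unfolding clif_carrier_def clif_mult_def
proof (intro CollectI allI impI)
  fix C assume "C \<notin> Pow {1..p+q}"
  then have "\<And>A B. A \<in> Pow {1..p+q} \<Longrightarrow> B \<in> Pow {1..p+q} \<Longrightarrow> sdiff A B \<noteq> C" by blast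
  then show "(\<Sum>A\<in>Pow {1..p + q}. \<Sum>B\<in>Pow {1..p + q}. if sdiff A B = C then clif_sign p A B * a A * b B else 0) = 0"
    by (intro sum.neutral ballI) auto
qed

lemma mult_bas_left:
  assumes "S \<subseteq> {1..p+q}" "C \<subseteq> {1..p+q}"
  shows "clif_mult p q (bas S) a C = clif_sign p S (sdiff S C) * a (sdiff S C)"
proof -
  have "clif_mult p q (bas S) a C = (\<Sum>A\<in>Pow {1..p+q}. if A = S then
     (\<Sum>B\<in>Pow {1..p+q}. if sdiff S B = C then clif_sign p S B * a B else 0) else 0)"
  proof -
    have eq: "(\<Sum>B\<in>Pow {1..p+q}. if sdiff X B = C then clif_sign p X B * bas S X * a B else 0) = (if X = S then
     (\<Sum>B\<in>Pow {1..p+q}. if sdiff S B = C then clif_sign p S B * a B else 0) else 0)" for X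
      by (cases "X = S") (simp_all add: bas_def cong: if_cong)
    show ?thesis unfolding clif_mult_def by (simp only: eq)
  qed
  also have "\<dots> = (\<Sum>B\<in>Pow {1..p+q}. if sdiff S B = C then clif_sign p S B * a B else 0)"
    using assms by (simp add: sum.delta)
  also have "\<dots> = (\<Sum>B\<in>Pow {1..p+q}. if B = sdiff S C then clif_sign p S B * a B else 0)"
    by (intro sum.cong refl) (simp only: sdiff_eq_iff)
  also have "\<dots> = clif_sign p S (sdiff S C) * a (sdiff S C)"
    using assms by (simp add: sum.delta sum.delta' subset_iff)
  finally show ?thesis .
qed

lemma sdiff_eq_iff2: "(sdiff A S = C) \<longleftrightarrow> (A = sdiff C S)"
  by blast

lemma mult_bas_right:
  assumes "S \<subseteq> {1..p+q}" "C \<subseteq> {1..p+q}"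
  shows "clif_mult p q a (bas S) C = clif_sign p (sdiff C S) S * a (sdiff C S)"
proof -
  have "clif_mult p q a (bas S) C = (\<Sum>A\<in>Pow {1..p+q}. 
     (\<Sum>B\<in>Pow {1..p+q}. if B = S then (if sdiff A S = C then clif_sign p A S * a A else 0) else 0))"
    unfolding clif_mult_def bas_def by (intro sum.cong refl) auto
  also have "\<dots> = (\<Sum>A\<in>Pow {1..p+q}. if sdiff A S = C then clif_sign p A S * a A else 0)"
    using assms by (simp add: sum.delta')
  also have "\<dots> = (\<Sum>A\<in>Pow {1..p+q}. if A = sdiff C S then clif_sign p A S * a A else 0)"
    by (intro sum.cong refl) (simp only: sdiff_eq_iff2)
  also have "\<dots> = clif_sign p (sdiff C S) S * a (sdiff C S)"
    using assms by (simp add: sum.delta sum.delta' subset_iff)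
  finally show ?thesis .
qed

lemma sign_empty_left: "clif_sign p {} C = 1"
  unfolding clif_sign_def by simp

lemma sign_sq: "clif_sign p A B * clif_sign p A B = 1"
  unfolding clif_sign_def by (simp add: algebra_simps flip: power_add mult_2)

lemma mult_scale_left: "clif_mult p q (\<lambda>A. r * a A) b C = r * clif_mult p q a b C"
  unfolding clif_mult_def by (simp add: sum_distrib_left algebra_simps if_distrib cong: if_cong)

lemma mult_scale_right: "clif_mult p q a (\<lambda>A. r * b A) C = r * clif_mult p q a b C"
  unfolding clif_mult_def by (simp add: sum_distrib_left algebra_simps if_distrib cong: if_cong)

lemma mult_sc_left:
  assumes "C \<subseteq> {1..p+q}"
  shows "clif_mult p q (sc r) a C = r * a C"
proof -
  have e: "sc r = (\<lambda>A. r * bas {} A)" unfolding sc_def bas_def by auto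
  show ?thesis unfolding e mult_scale_left using mult_bas_left[of "{}" p q C a, OF _ assms]
    by (simp add: sign_empty_left)
qed

lemma sign_single_left:
  "clif_sign p {i} D = (-1) ^ card {j\<in>D. j < i} * (-1) ^ (if i \<in> D \<and> p < i then 1 else 0)"
proof -
  have e1: "{(a, b). a \<in> {i} \<and> b \<in> D \<and> b < a} = Pair i ` {j\<in>D. j < i}" by auto
  have e2: "{k \<in> {i} \<inter> D. p < k} = (if i \<in> D \<and> p < i then {i} else {})" by auto
  have "card (Pair i ` {j\<in>D. j < i}) = card {j\<in>D. j < i}" by (rule card_image) (auto simp: inj_on_def)
  then show ?thesis unfolding clif_sign_def e1 e2 by simp
qed

lemma sign_single_right:
  "clif_sign p D {i} = (-1) ^ card {j\<in>D. i < j} * (-1) ^ (if i \<in> D \<and> p < i then 1 else 0)"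
proof -
  have e1: "{(a, b). a \<in> D \<and> b \<in> {i} \<and> b < a} = (\<lambda>k. (k, i)) ` {j\<in>D. i < j}" by auto
  have i: "inj (\<lambda>k::nat. (k, i))" by (auto simp: inj_def)
  have e2: "{k \<in> D \<inter> {i}. p < k} = (if i \<in> D \<and> p < i then {i} else {})" by auto
  show ?thesis unfolding clif_sign_def e1 e2 by (simp add: card_image inj_on_subset[OF i])
qed

lemma z1: "{j. j = i \<and> i < (j::nat)} = {}" by auto
lemma z2: "{j. j = i \<and> j < (i::nat)} = {}" by auto

lemma conj_sign:
  assumes "finite C"
  shows "clif_sign p {i} {i} * (clif_sign p {i} (sdiff {i} C) * clif_sign p C {i}) = (-1) ^ card (C - {i})"
proof -
  have e1: "{j \<in> sdiff {i} C. j < i} = {j\<in>C. j < i}" by auto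
  have e2: "C - {i} = {j\<in>C. j < i} \<union> {j\<in>C. i < j}" by auto
  have c: "card (C - {i}) = card {j\<in>C. j < i} + card {j\<in>C. i < j}"
    unfolding e2 using assms by (intro card_Un_disjoint) auto
  have s: "clif_sign p {i} {i} = (-1) ^ (if p < i then 1 else 0)"
    using sign_single_left[of p i "{i}"] by (simp add: Collect_conv_if)
  show ?thesis
    unfolding s sign_single_left sign_single_right e1 c power_add
    by (cases "i \<in> C"; cases "p < i") (simp_all add: algebra_simps z1 z2)
qed

lemma carrier_zero: "C \<notin> Pow {1..n} \<Longrightarrow> a \<in> clif_carrier n \<Longrightarrow> a C = 0"
  unfolding clif_carrier_def by auto

lemma mult_zero_out: "C \<notin> Pow {1..p+q} \<Longrightarrow> clif_mult p q a b C = 0"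
  using mult_carrier[of p q a b] carrier_zero by blast

lemma sc_carrier: "sc r \<in> clif_carrier n"
  unfolding clif_carrier_def sc_def by auto

lemma bas_carrier: "S \<subseteq> {1..n} \<Longrightarrow> bas S \<in> clif_carrier n"
  unfolding clif_carrier_def bas_def by auto

lemma mult_sc_sc: "clif_mult p q (sc r) (sc s) = sc (r * s)"
proof
  fix C show "clif_mult p q (sc r) (sc s) C = sc (r * s) C"
  proof (cases "C \<subseteq> {1..p+q}")
    case True then show ?thesis by (simp add: mult_sc_left) (simp add: sc_def)
  next
    case False then have "C \<noteq> {}" by auto
    with False show ?thesis using mult_zero_out[of C p q] by (simp add: sc_def)
  qed
qed

lemma star_card: "finite A \<Longrightarrow> finite B \<Longrightarrow> ((-1::real) ^ card (sdiff A B)) = (-1) ^ card A * (-1) ^ card B"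
proof -
  assume f: "finite A" "finite B"
  have c1: "card (sdiff A B) = card (A - B) + card (B - A)" using f by (intro card_Un_disjoint) auto
  have c2: "card A = card (A - B) + card (A \<inter> B)"
    using f card_Un_disjoint[of "A-B" "A \<inter> B"] by (simp add: Un_Diff_Int) blast
  have c3: "card B = card (B - A) + card (A \<inter> B)"
    using f card_Un_disjoint[of "B-A" "B \<inter> A"] by (simp add: Un_Diff_Int Int_commute[of A B]) blast
  have "((-1::real) ^ card A * (-1) ^ card B) = (-1) ^ card (sdiff A B) * ((-1) ^ card (A \<inter> B) * (-1) ^ card (A \<inter> B))"
    unfolding c1 c2 c3 power_add by (simp add: algebra_simps)
  also have "(-1::real) ^ card (A \<inter> B) * (-1) ^ card (A \<inter> B) = 1"
    by (simp flip: power_add mult_2)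
  finally show ?thesis by simp
qed

lemma star_mult: "clif_star (clif_mult p q a b) = clif_mult p q (clif_star a) (clif_star b)"
proof
  fix C
  have "clif_star (clif_mult p q a b) C = (\<Sum>A\<in>Pow {1..p+q}. \<Sum>B\<in>Pow {1..p+q}.
      if sdiff A B = C then (-1) ^ card (sdiff A B) * (clif_sign p A B * a A * b B) else 0)"
    unfolding clif_star_def clif_mult_def by (simp add: sum_distrib_left if_distrib cong: if_cong)
  also have "\<dots> = clif_mult p q (clif_star a) (clif_star b) C"
    unfolding clif_star_def clif_mult_def
    by (intro sum.cong refl) (auto simp: star_card finite_subset cong: if_cong)
  finally show "clif_star (clif_mult p q a b) C = clif_mult p q (clif_star a) (clif_star b) C" .
qed


context
  fixes p q :: nat and B :: "('a \<Rightarrow> clif) set"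
  assumes Bc: "\<forall>f\<in>B. \<forall>y. f y \<in> clif_carrier (p+q)"
begin

lemma gen_carrier: "f \<in> gen_alg p q B \<Longrightarrow> f y \<in> clif_carrier (p+q)"
proof (induction f arbitrary: y rule: gen_alg.induct)
  case (gen_base f) then show ?case using Bc by auto
next
  case (gen_const c) then show ?case by simp
next
  case (gen_add f g) then show ?case unfolding clif_carrier_def by auto
next
  case (gen_scale f r) then show ?case unfolding clif_carrier_def by auto
next
  case (gen_mult f g) then show ?case by (simp add: mult_carrier)
qed

lemma gen_sum:
  assumes "finite I" "\<forall>i\<in>I. F i \<in> gen_alg p q B"
  shows "(\<lambda>y. \<lambda>A. \<Sum>i\<in>I. F i y A) \<in> gen_alg p q B"
  using assms
proof (induction I rule: finite_induct)
  case empty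
  have "(\<lambda>y. (\<lambda>A. 0::real)) \<in> gen_alg p q B" by (rule gen_const) (simp add: clif_carrier_def)
  then show ?case by simp
next
  case (insert i I)
  then have "(\<lambda>y. \<lambda>A. F i y A + (\<Sum>i\<in>I. F i y A)) \<in> gen_alg p q B"
    using gen_add[of "F i" p q B "\<lambda>y. \<lambda>A. \<Sum>i\<in>I. F i y A"] by simp
  then show ?case using insert by simp
qed

lemma gen_mult_const_left: "c \<in> clif_carrier (p+q) \<Longrightarrow> f \<in> gen_alg p q B \<Longrightarrow>
   (\<lambda>y. clif_mult p q c (f y)) \<in> gen_alg p q B"
  using gen_mult[OF gen_const] by blast

lemma gen_mult_const_right: "c \<in> clif_carrier (p+q) \<Longrightarrow> f \<in> gen_alg p q B \<Longrightarrow>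
   (\<lambda>y. clif_mult p q (f y) c) \<in> gen_alg p q B"
  using gen_mult[OF _ gen_const] by blast

lemma Pgen:
  assumes g: "g \<in> gen_alg p q B" and i: "i \<in> {1..p+q}"
  shows "(\<lambda>y. \<lambda>C. (1 + (-1) ^ card (C - {i})) / 2 * g y C) \<in> gen_alg p q B"
proof -
  let ?s = "clif_sign p {i} {i}"
  define u where "u = (\<lambda>y. clif_mult p q (g y) (bas {i}))"
  define v where "v = (\<lambda>y. clif_mult p q (bas {i}) (u y))"
  have ib: "{i} \<subseteq> {1..p+q}" using i by auto
  have u: "u \<in> gen_alg p q B" unfolding u_def by (rule gen_mult_const_right[OF bas_carrier[OF ib] g])
  have v: "v \<in> gen_alg p q B" unfolding v_def by (rule gen_mult_const_left[OF bas_carrier[OF ib] u])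
  have "(\<lambda>y. \<lambda>A. ?s * v y A) \<in> gen_alg p q B" by (rule gen_scale[OF v])
  then have "(\<lambda>y. \<lambda>A. g y A + (\<lambda>y. \<lambda>A. ?s * v y A) y A) \<in> gen_alg p q B" by (rule gen_add[OF g])
  then have w: "(\<lambda>y. \<lambda>A. (1/2) * (g y A + ?s * v y A)) \<in> gen_alg p q B"
    using gen_scale by fastforce
  have key: "(1/2) * (g y C + ?s * v y C) = (1 + (-1) ^ card (C - {i})) / 2 * g y C" for y C
  proof (cases "C \<subseteq> {1..p+q}")
    case True
    have D: "sdiff {i} C \<subseteq> {1..p+q}" using True ib by auto
    have DD: "sdiff (sdiff {i} C) {i} = C" by auto
    have "v y C = clif_sign p {i} (sdiff {i} C) * clif_sign p C {i} * g y C"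
      unfolding v_def u_def mult_bas_left[OF ib True] mult_bas_right[OF ib D] DD by simp
    then have "?s * v y C = (-1) ^ card (C - {i}) * g y C"
      using conj_sign[of C p i] finite_subset[OF True] by (simp add: mult.assoc)
    then show ?thesis by (simp add: algebra_simps)
  next
    case False
    then have "g y C = 0" "v y C = 0" unfolding v_def
      using carrier_zero[OF _ gen_carrier[OF g]] mult_zero_out by auto
    then show ?thesis by simp
  qed
  show ?thesis using w unfolding key .
qed

lemma Pall:
  assumes g: "g \<in> gen_alg p q B" and I: "finite I" "I \<subseteq> {1..p+q}"
  shows "(\<lambda>y. \<lambda>C. (\<Prod>i\<in>I. (1 + (-1) ^ card (C - {i})) / 2) * g y C) \<in> gen_alg p q B"
  using I
proof (induction I rule: finite_induct)
  case empty then show ?case using g by simp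
next
  case (insert i I)
  then have "(\<lambda>y. \<lambda>C. (1 + (-1) ^ card (C - {i})) / 2 *
      (\<lambda>y. \<lambda>C. (\<Prod>i\<in>I. (1 + (-1) ^ card (C - {i})) / 2) * g y C) y C) \<in> gen_alg p q B"
    by (intro Pgen) auto
  then show ?case using insert by (simp add: mult.assoc)
qed

lemma gen_star:
  assumes sB: "\<forall>f\<in>B. (\<lambda>y. clif_star (f y)) \<in> gen_alg p q B"
  shows "f \<in> gen_alg p q B \<Longrightarrow> (\<lambda>y. clif_star (f y)) \<in> gen_alg p q B"
proof (induction f rule: gen_alg.induct)
  case (gen_base f) then show ?case using sB by auto
next
  case (gen_const c)
  then have "clif_star c \<in> clif_carrier (p+q)" unfolding clif_carrier_def clif_star_def by auto
  then show ?case by (rule gen_alg.gen_const)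
next
  case (gen_add f g)
  have "(\<lambda>y. \<lambda>A. clif_star (f y) A + clif_star (g y) A) \<in> gen_alg p q B"
    using gen_alg.gen_add[OF gen_add.IH] by simp
  moreover have "(\<lambda>y. \<lambda>A. clif_star (f y) A + clif_star (g y) A) = (\<lambda>y. clif_star (\<lambda>A. f y A + g y A))"
    unfolding clif_star_def by (simp add: algebra_simps)
  ultimately show ?case by simp
next
  case (gen_scale f r)
  have "(\<lambda>y. \<lambda>A. r * clif_star (f y) A) \<in> gen_alg p q B"
    using gen_alg.gen_scale[OF gen_scale.IH] by simp
  moreover have "(\<lambda>y. \<lambda>A. r * clif_star (f y) A) = (\<lambda>y. clif_star (\<lambda>A. r * f y A))"
    unfolding clif_star_def by (simp add: algebra_simps)
  ultimately show ?case by simp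
next
  case (gen_mult f g)
  then show ?case using gen_alg.gen_mult[OF gen_mult.IH] by (simp add: star_mult)
qed

lemma proj:
  assumes sB: "odd (p+q) \<Longrightarrow> (\<forall>f\<in>B. (\<lambda>y. clif_star (f y)) \<in> gen_alg p q B)"
    and f: "f \<in> gen_alg p q B"
  shows "(\<lambda>y. sc (f y {})) \<in> gen_alg p q B"
proof -
  let ?N = "{1..p+q}"
  define W where "W C = (\<Prod>i\<in>?N. (1 + (-1) ^ card (C - {i})) / (2::real))" for C
  have W0: "W {} = 1" unfolding W_def by simp
  have Wev: "W C = 0" if W1: "C \<subseteq> ?N" "C \<noteq> {}" "even (card C)" for C
  proof -
    obtain i where i: "i \<in> C" using W1(2) by blast
    have "finite C" using W1 finite_subset by blast
    then have "card (C - {i}) = card C - 1" "card C > 0" using i by (auto simp: card_gt_0_iff)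
    then have "odd (card (C - {i}))" using W1(3) by auto
    then have z: "(1 + (-1::real) ^ card (C - {i})) / 2 = 0" by simp
    have "\<exists>j\<in>?N. (1 + (-1::real) ^ card (C - {j})) / 2 = 0" using i W1(1) z by blast
    then show ?thesis unfolding W_def by (intro prod_zero) auto
  qed
  have Wod: "W C = 0" if W2: "C \<subseteq> ?N" "C \<noteq> ?N" "odd (card C)" for C
  proof -
    obtain i where i: "i \<in> ?N" "i \<notin> C" using W2(1,2) by blast
    then have "C - {i} = C" by auto
    then have z: "(1 + (-1::real) ^ card (C - {i})) / 2 = 0" using W2(3) by simp
    have "\<exists>j\<in>?N. (1 + (-1::real) ^ card (C - {j})) / 2 = 0" using i z by blast
    then show ?thesis unfolding W_def by (intro prod_zero) auto
  qed
  have cz: "\<And>y C. \<not> C \<subseteq> ?N \<Longrightarrow> f y C = 0"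
    using carrier_zero[OF _ gen_carrier[OF f]] by auto
  show ?thesis
  proof (cases "odd (p+q)")
    case True
    have s: "(\<lambda>y. clif_star (f y)) \<in> gen_alg p q B" by (rule gen_star[OF sB[OF True] f])
    have "(\<lambda>y. \<lambda>A. f y A + clif_star (f y) A) \<in> gen_alg p q B" using gen_add[OF f s] by simp
    then have "(\<lambda>y. \<lambda>A. (1/2) * (f y A + clif_star (f y) A)) \<in> gen_alg p q B"
      using gen_scale by fastforce
    then have h: "(\<lambda>y. \<lambda>A. (1 + (-1) ^ card A) / 2 * f y A) \<in> gen_alg p q B"
      unfolding clif_star_def by (simp add: algebra_simps add_divide_distrib)
    have "(\<lambda>y. \<lambda>C. W C * ((1 + (-1) ^ card C) / 2 * f y C)) \<in> gen_alg p q B"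
      using Pall[OF h] unfolding W_def by simp
    moreover have "(\<lambda>y. \<lambda>C. W C * ((1 + (-1) ^ card C) / 2 * f y C)) = (\<lambda>y. sc (f y {}))"
    proof (intro ext)
      fix y C
      show "W C * ((1 + (-1) ^ card C) / 2 * f y C) = sc (f y {}) C"
      proof (cases "C \<subseteq> ?N")
        case False then show ?thesis using cz[OF False] by (auto simp: sc_def)
      next
        case T: True
        show ?thesis
        proof (cases "C = {}")
          case True then show ?thesis by (simp add: W0 sc_def)
        next
          case False
          show ?thesis
          proof (cases "even (card C)")
            case True then show ?thesis using Wev[OF T False] False by (simp add: sc_def)
          next
            case False then show ?thesis using \<open>C \<noteq> {}\<close> by (simp add: sc_def)
          qed
        qed
      qed
    qed
    ultimately show ?thesis by simp
  next
    case False
    have "(\<lambda>y. \<lambda>C. W C * f y C) \<in> gen_alg p q B"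
      using Pall[OF f] unfolding W_def by simp
    moreover have "(\<lambda>y. \<lambda>C. W C * f y C) = (\<lambda>y. sc (f y {}))"
    proof (intro ext)
      fix y C
      show "W C * f y C = sc (f y {}) C"
      proof (cases "C \<subseteq> ?N")
        case False then show ?thesis using cz[OF False] by (auto simp: sc_def)
      next
        case T: True
        show ?thesis
        proof (cases "C = {}")
          case True then show ?thesis by (simp add: W0 sc_def)
        next
          case ne: False
          show ?thesis
          proof (cases "even (card C)")
            case True then show ?thesis using Wev[OF T ne] ne by (simp add: sc_def)
          next
            case odd: False
            then have "C \<noteq> ?N" using \<open>\<not> odd (p+q)\<close> by auto
            then show ?thesis using Wod[OF T _ odd] ne by (simp add: sc_def)
          qed
        qed
      qed
    qed
    ultimately show ?thesis by simp
  qed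
qed

lemma component:
  assumes sB: "odd (p+q) \<Longrightarrow> (\<forall>f\<in>B. (\<lambda>y. clif_star (f y)) \<in> gen_alg p q B)"
    and f: "f \<in> gen_alg p q B" and S: "S \<subseteq> {1..p+q}"
  shows "(\<lambda>y. sc (f y S)) \<in> gen_alg p q B"
proof -
  define g where "g = (\<lambda>y. clif_mult p q (bas S) (f y))"
  have g: "g \<in> gen_alg p q B" unfolding g_def by (rule gen_mult_const_left[OF bas_carrier[OF S] f])
  have gv: "g y {} = clif_sign p S S * f y S" for y
    unfolding g_def using mult_bas_left[OF S empty_subsetI, of "f y"] by simp
  have "(\<lambda>y. \<lambda>A. clif_sign p S S * sc (g y {}) A) \<in> gen_alg p q B"
    by (rule gen_scale[OF proj[OF sB g]])
  moreover have "(\<lambda>y. \<lambda>A. clif_sign p S S * sc (g y {}) A) = (\<lambda>y. sc (f y S))"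
    unfolding gv sc_def by (intro ext) (simp add: mult.assoc[symmetric] sign_sq)
  ultimately show ?thesis by simp
qed

end

theorem theorem3:
  fixes p q :: nat and B :: "('a::metric_space \<Rightarrow> clif) set"
  assumes "p + q \<ge> 1"
    and "B \<subseteq> clif_cont (p+q)"
    and "(\<lambda>y. clif_one) \<in> B"
    and "\<forall>x y. x \<noteq> y \<longrightarrow> (\<exists>f\<in>B. f x \<noteq> f y)"
    and "odd (p+q) \<Longrightarrow> (\<forall>f\<in>B. (\<lambda>y. clif_star (f y)) \<in> B)"
  shows "\<forall>f \<in> clif_cont (p+q). \<forall>K. compact K \<longrightarrow> (\<forall>\<epsilon>>0.
           \<exists>g \<in> gen_alg p q B. \<forall>y\<in>K. \<forall>A. \<bar>f y A - g y A\<bar> < \<epsilon>)"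
proof (intro ballI allI impI)
  fix f :: "'a \<Rightarrow> clif" and K :: "'a set" and \<epsilon> :: real
  assume f: "f \<in> clif_cont (p+q)" and K: "compact K" and e: "\<epsilon> > 0"
  let ?N = "{1..p+q}"
  have Bc: "\<forall>f\<in>B. \<forall>y. f y \<in> clif_carrier (p+q)" using assms(2) unfolding clif_cont_def by auto
  have sB: "odd (p+q) \<Longrightarrow> (\<forall>f\<in>B. (\<lambda>y. clif_star (f y)) \<in> gen_alg p q B)"
    using assms(5) gen_base by blast
  define P where "P = (\<lambda>h. continuous_on K h \<and> (\<lambda>y. sc (h y)) \<in> gen_alg p q B)"
  have SW: "\<exists>g. P g \<and> (\<forall>x\<in>K. \<bar>\<phi> x - g x\<bar> < \<epsilon>)" if phi: "continuous_on K \<phi>" for \<phi>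
  proof (rule Stone_Weierstrass_HOL[of K P])
    show "compact K" by (rule K)
    show "P (\<lambda>x. c)" for c unfolding P_def by (simp add: gen_const sc_carrier)
    show "continuous_on K h" if "P h" for h using that unfolding P_def by simp
    show "P (\<lambda>x. h x + k x)" if "P h \<and> P k" for h k
    proof -
      have "(\<lambda>y. \<lambda>A. sc (h y) A + sc (k y) A) \<in> gen_alg p q B"
        using that gen_add unfolding P_def by blast
      moreover have "(\<lambda>y. \<lambda>A. sc (h y) A + sc (k y) A) = (\<lambda>y. sc (h y + k y))"
        unfolding sc_def by (intro ext) simp
      ultimately show ?thesis using that unfolding P_def by (auto intro: continuous_on_add)
    qed
    show "P (\<lambda>x. h x * k x)" if "P h \<and> P k" for h k
    proof -
      have "(\<lambda>y. clif_mult p q (sc (h y)) (sc (k y))) \<in> gen_alg p q B"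
        using that gen_mult unfolding P_def by blast
      then show ?thesis using that unfolding P_def mult_sc_sc by (auto intro: continuous_on_mult)
    qed
    show "\<exists>h. P h \<and> h x \<noteq> h y" if "x \<in> K \<and> y \<in> K \<and> x \<noteq> y" for x y
    proof -
      have "x \<noteq> y" using that by simp
      then obtain F where F: "F \<in> B" "F x \<noteq> F y" using assms(4) by blast
      then obtain S where S: "F x S \<noteq> F y S" by (meson ext)
      have FC: "F x \<in> clif_carrier (p+q)" "F y \<in> clif_carrier (p+q)" using Bc F by auto
      have SN: "S \<subseteq> ?N"
      proof (rule ccontr)
        assume "\<not> S \<subseteq> ?N"
        then have "S \<notin> Pow ?N" by simp
        then have "F x S = 0" "F y S = 0" using carrier_zero FC by blast+
        with S show False by simp
      qed
      have "continuous_on UNIV F" using F assms(2) unfolding clif_cont_def by auto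
      then have "continuous_on UNIV (\<lambda>z. F z S)" by (rule continuous_on_product_then_coordinatewise)
      then have c: "continuous_on K (\<lambda>z. F z S)" by (rule continuous_on_subset) simp
      have "(\<lambda>z. sc (F z S)) \<in> gen_alg p q B" by (rule component[OF Bc sB gen_base[OF F(1)] SN])
      with c S show ?thesis unfolding P_def by blast
    qed
  qed (use phi e in auto)
  have fc: "continuous_on UNIV f" "\<And>y. f y \<in> clif_carrier (p+q)" using f unfolding clif_cont_def by auto
  have "\<forall>S\<in>Pow ?N. \<exists>g. P g \<and> (\<forall>x\<in>K. \<bar>f x S - g x\<bar> < \<epsilon>)"
  proof
    fix S
    have "continuous_on UNIV (\<lambda>z. f z S)" by (rule continuous_on_product_then_coordinatewise[OF fc(1)])
    then have "continuous_on K (\<lambda>z. f z S)" by (rule continuous_on_subset) simp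
    then show "\<exists>g. P g \<and> (\<forall>x\<in>K. \<bar>f x S - g x\<bar> < \<epsilon>)" by (rule SW)
  qed
  then obtain G where G: "\<And>S. S \<in> Pow ?N \<Longrightarrow> P (G S) \<and> (\<forall>x\<in>K. \<bar>f x S - G S x\<bar> < \<epsilon>)"
    by metis
  define g where "g = (\<lambda>y. \<lambda>A. \<Sum>S\<in>Pow ?N. clif_mult p q (sc (G S y)) (bas S) A)"
  have "g \<in> gen_alg p q B" unfolding g_def
  proof (rule gen_sum[OF Bc])
    show "\<forall>S\<in>Pow ?N. (\<lambda>y. clif_mult p q (sc (G S y)) (bas S)) \<in> gen_alg p q B"
    proof
      fix S assume S: "S \<in> Pow ?N"
      then have "(\<lambda>y. sc (G S y)) \<in> gen_alg p q B" using G unfolding P_def by blast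
      then show "(\<lambda>y. clif_mult p q (sc (G S y)) (bas S)) \<in> gen_alg p q B"
        using gen_mult_const_right[OF Bc bas_carrier] S by blast
    qed
  qed simp
  moreover have "\<forall>y\<in>K. \<forall>A. \<bar>f y A - g y A\<bar> < \<epsilon>"
  proof (intro ballI allI)
    fix y A assume y: "y \<in> K"
    show "\<bar>f y A - g y A\<bar> < \<epsilon>"
    proof (cases "A \<subseteq> ?N")
      case True
      have "g y A = (\<Sum>S\<in>Pow ?N. G S y * bas S A)"
        unfolding g_def using mult_sc_left[OF True] by simp
      also have "\<dots> = (\<Sum>S\<in>Pow ?N. if A = S then G S y else 0)"
        unfolding bas_def by (intro sum.cong refl) auto
      also have "\<dots> = G A y" using True by (simp add: sum.delta')
      finally show ?thesis using G[of A] True y by auto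
    next
      case False
      have "g y A = 0" unfolding g_def using mult_zero_out[of A] False by simp
      moreover have "f y A = 0" using carrier_zero[OF _ fc(2)] False by blast
      ultimately show ?thesis using e by simp
    qed
  qed
  ultimately show "\<exists>g \<in> gen_alg p q B. \<forall>y\<in>K. \<forall>A. \<bar>f y A - g y A\<bar> < \<epsilon>" by blast
qed

end
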